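(* Let $R$ be a commutative ring, $n\ge 1$, and $I$ an $n$-absorbing ideal of $R$. If $I_1,\dots,I_{n+1}$ are u-ideals of $R$ with $I_1I_2\cdots I_{n+1}\subseteq I$, then $I$ contains the product of some $n$ of the ideals $I_1,\dots,I_{n+1}$.
   Context: All rings are commutative with identity $1\neq 0$. An ideal $I$ of $R$ is $n$-absorbing if whenever $x_1,\dots,x_{n+1}\in R$ and $x_1x_2\cdots x_{n+1}\in I$, the product of some $n$ of the $x_i$'s lies in $I$. An ideal $J$ of $R$ is a u-ideal if whenever $J\subseteq J_1\cup\cdots\cup J_m$ for finitely many ideals $J_1,\dots,J_m$ of $R$, then $J\subseteq J_i$ for some $i$. *)

theory Defs
  imports "HOL-Algebra.Algebra"
begin

fun ideal_prod_list :: "('a, 'b) ring_scheme \<Rightarrow> 'a set list \<Rightarrow> 'a set" where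
  "ideal_prod_list R [] = carrier R"
| "ideal_prod_list R (J # Js) = J \<cdot>\<^bsub>R\<^esub> ideal_prod_list R Js"

definition n_absorbing :: "('a, 'b) ring_scheme \<Rightarrow> nat \<Rightarrow> 'a set \<Rightarrow> bool" where
  "n_absorbing R n I \<longleftrightarrow> ideal I R \<and>
     (\<forall>x :: nat \<Rightarrow> 'a. (\<forall>i<Suc n. x i \<in> carrier R) \<and> finprod R x {..<Suc n} \<in> I \<longrightarrow>
        (\<exists>j<Suc n. finprod R x ({..<Suc n} - {j}) \<in> I))"

definition u_ideal :: "('a, 'b) ring_scheme \<Rightarrow> 'a set \<Rightarrow> bool" where
  "u_ideal R J \<longleftrightarrow> ideal J R \<and>
     (\<forall>F. finite F \<and> (\<forall>K\<in>F. ideal K R) \<and> J \<subseteq> \<Union>F \<longrightarrow> (\<exists>K\<in>F. J \<subseteq> K))"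

end

theory Submission imports Defs begin
context cring begin
lemma colon_ideal:
  assumes "ideal I R" "B \<subseteq> carrier R"
  shows "ideal {a\<in>carrier R. \<forall>b\<in>B. a \<otimes> b \<in> I} R"
proof (rule idealI)
  show "ring R" by (rule ring_axioms)
  show "subgroup {a\<in>carrier R. \<forall>b\<in>B. a \<otimes> b \<in> I} (add_monoid R)"
  proof (rule add.subgroupI)
    show "{a\<in>carrier R. \<forall>b\<in>B. a \<otimes> b \<in> I} \<noteq> {}"
      using assms by (auto intro!: exI[of _ \<zero>] simp: additive_subgroup.zero_closed ideal.axioms(1) subsetD)
  next
    fix a assume a: "a \<in> {a\<in>carrier R. \<forall>b\<in>B. a \<otimes> b \<in> I}"
    show "\<ominus> a \<in> {a\<in>carrier R. \<forall>b\<in>B. a \<otimes> b \<in> I}"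
      using a assms by (auto simp: l_minus subsetD additive_subgroup.a_inv_closed ideal.axioms(1))
  next
    fix a b assume a: "a \<in> {a\<in>carrier R. \<forall>b\<in>B. a \<otimes> b \<in> I}" and b: "b \<in> {a\<in>carrier R. \<forall>b\<in>B. a \<otimes> b \<in> I}"
    show "a \<oplus> b \<in> {a\<in>carrier R. \<forall>b\<in>B. a \<otimes> b \<in> I}"
      using a b assms by (auto simp: l_distr subsetD additive_subgroup.a_closed ideal.axioms(1))
  qed auto
next
  fix a x assume a: "a \<in> {a\<in>carrier R. \<forall>b\<in>B. a \<otimes> b \<in> I}" and x: "x \<in> carrier R"
  show "x \<otimes> a \<in> {a\<in>carrier R. \<forall>b\<in>B. a \<otimes> b \<in> I}"
    using a x assms by (auto simp: m_assoc subsetD ideal.I_l_closed)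
  then show "a \<otimes> x \<in> {a\<in>carrier R. \<forall>b\<in>B. a \<otimes> b \<in> I}"
    using a x by (simp add: m_comm)
qed

lemma ideal_prod_subI:
  assumes "ideal K R" "\<And>a b. a \<in> I \<Longrightarrow> b \<in> J \<Longrightarrow> a \<otimes> b \<in> K"
  shows "I \<cdot> J \<subseteq> K"
proof
  fix s assume "s \<in> I \<cdot> J" thus "s \<in> K"
    by (induct s rule: ideal_prod.induct) (auto simp: assms additive_subgroup.a_closed ideal.axioms(1))
qed

lemma ideal_prod_list_ideal:
  assumes "\<And>J. J \<in> set Js \<Longrightarrow> ideal J R"
  shows "ideal (ideal_prod_list R Js) R"
  using assms by (induct Js) (auto simp: oneideal ideal_prod_is_ideal)

lemma prod_list_sub:
  assumes "distinct L" "\<And>i. i \<in> set L \<Longrightarrow> ideal (Is i) R" "ideal K R"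
  shows "ideal_prod_list R (map Is L) \<subseteq> K \<longleftrightarrow>
    (\<forall>x. (\<forall>i\<in>set L. x i \<in> Is i) \<longrightarrow> finprod R x (set L) \<in> K)"
  using assms
proof (induct L arbitrary: K)
  case Nil
  then show ?case using ideal.I_l_closed[of K R \<one>] by (auto simp: ideal.Icarr)
next
  case (Cons i L)
  have iL: "i \<notin> set L" "distinct L" using Cons.prems by auto
  have Ii: "ideal (Is i) R" using Cons.prems by auto
  have IL: "\<And>j. j \<in> set L \<Longrightarrow> ideal (Is j) R" using Cons.prems by auto
  let ?P = "ideal_prod_list R (map Is L)"
  have Pid: "ideal ?P R" by (rule ideal_prod_list_ideal) (auto simp: IL)
  have carr: "\<And>x. \<forall>j\<in>set (i#L). x j \<in> Is j \<Longrightarrow> x \<in> set (i#L) \<rightarrow> carrier R"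
  proof
    fix x j assume "\<forall>j\<in>set (i#L). x j \<in> Is j" "j \<in> set (i#L)"
    then have "x j \<in> Is j" by blast
    then show "x j \<in> carrier R" using ideal.Icarr[OF Cons.prems(2)[of j]] \<open>j \<in> set (i#L)\<close> by blast
  qed
  have fp: "\<And>x. \<forall>j\<in>set (i#L). x j \<in> Is j \<Longrightarrow> finprod R x (set (i#L)) = x i \<otimes> finprod R x (set L)"
  proof -
    fix x assume x: "\<forall>j\<in>set (i#L). x j \<in> Is j"
    have c: "x \<in> set (i#L) \<rightarrow> carrier R" by (rule carr[OF x])
    have "x \<in> set L \<rightarrow> carrier R" "x i \<in> carrier R" using c by auto
    then show "finprod R x (set (i#L)) = x i \<otimes> finprod R x (set L)"
      using finprod_insert[of "set L" i x] iL(1) by simp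
  qed
  show ?case
  proof
    assume H: "ideal_prod_list R (map Is (i # L)) \<subseteq> K"
    have inP: "\<forall>x. (\<forall>j\<in>set L. x j \<in> Is j) \<longrightarrow> finprod R x (set L) \<in> ?P"
      using Cons.hyps[OF iL(2) IL Pid] by simp
    show "\<forall>x. (\<forall>j\<in>set (i#L). x j \<in> Is j) \<longrightarrow> finprod R x (set (i#L)) \<in> K"
    proof (intro allI impI)
      fix x assume x: "\<forall>j\<in>set (i#L). x j \<in> Is j"
      have "x i \<otimes> finprod R x (set L) \<in> Is i \<cdot> ?P"
        using x inP by (auto intro: ideal_prod.prod)
      then show "finprod R x (set (i#L)) \<in> K" using H fp[OF x] by auto
    qed
  next
    assume H: "\<forall>x. (\<forall>j\<in>set (i#L). x j \<in> Is j) \<longrightarrow> finprod R x (set (i#L)) \<in> K"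
    show "ideal_prod_list R (map Is (i # L)) \<subseteq> K"
    proof (simp, rule ideal_prod_subI[OF Cons.prems(3)])
      fix a b assume a: "a \<in> Is i" and b: "b \<in> ?P"
      have acarr: "a \<in> carrier R" using a Ii by (simp add: ideal.Icarr)
      have Cid: "ideal {b\<in>carrier R. \<forall>c\<in>{a}. c \<otimes> b \<in> K} R"
      proof -
        have "{b\<in>carrier R. \<forall>c\<in>{a}. c \<otimes> b \<in> K} = {b\<in>carrier R. \<forall>c\<in>{a}. b \<otimes> c \<in> K}"
          using acarr m_comm by auto
        then show ?thesis using colon_ideal[OF Cons.prems(3), of "{a}"] acarr by simp
      qed
      have "\<forall>x. (\<forall>j\<in>set L. x j \<in> Is j) \<longrightarrow> finprod R x (set L) \<in> {b\<in>carrier R. \<forall>c\<in>{a}. c \<otimes> b \<in> K}"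
      proof (intro allI impI)
        fix x assume x: "\<forall>j\<in>set L. x j \<in> Is j"
        let ?y = "x(i := a)"
        have y: "\<forall>j\<in>set (i#L). ?y j \<in> Is j" using x a iL by auto
        have e: "finprod R ?y (set L) = finprod R x (set L)"
        proof (rule finprod_cong')
          show "x \<in> set L \<rightarrow> carrier R" using x IL ideal.Icarr by fastforce
        qed (use iL in auto)
        have "finprod R ?y (set (i#L)) \<in> K" using H y by blast
        moreover have "finprod R ?y (set (i#L)) = a \<otimes> finprod R x (set L)"
          using fp[OF y] e by (simp only: fun_upd_same)
        ultimately have "a \<otimes> finprod R x (set L) \<in> K" by simp
        moreover have "finprod R x (set L) \<in> carrier R"
          using x IL ideal.Icarr by (intro finprod_closed) fastforce
        ultimately show "finprod R x (set L) \<in> {b\<in>carrier R. \<forall>c\<in>{a}. c \<otimes> b \<in> K}" by simp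
      qed
      then have "?P \<subseteq> {b\<in>carrier R. \<forall>c\<in>{a}. c \<otimes> b \<in> K}"
        using Cons.hyps[OF iL(2) IL Cid] by blast
      then show "a \<otimes> b \<in> K" using b by auto
    qed
  qed
qed

lemma finprod_split:
  assumes "finite T" "k \<in> T" "y \<in> T \<rightarrow> carrier R"
  shows "finprod R y T = y k \<otimes> finprod R y (T - {k})"
proof -
  have "T = insert k (T - {k})" using assms by auto
  then have "finprod R y T = finprod R y (insert k (T - {k}))" by simp
  also have "\<dots> = y k \<otimes> finprod R y (T - {k})"
    using assms by (intro finprod_insert) auto
  finally show ?thesis .
qed

end

definition Mx :: "('a, 'b) ring_scheme \<Rightarrow> (nat \<Rightarrow> 'a set) \<Rightarrow> 'a set \<Rightarrow> nat \<Rightarrow> (nat \<Rightarrow> 'a) \<Rightarrow> nat set \<Rightarrow> bool" where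
  "Mx R Is I k x T \<longleftrightarrow> (\<forall>y. (\<forall>i\<in>T. y i \<in> Is i) \<and> (\<forall>i\<in>T. k \<le> i \<longrightarrow> y i = x i) \<longrightarrow> finprod R y T \<in> I)"

context cring begin

lemma main_claim:
  assumes I_id: "ideal I R"
    and Is_id: "\<And>i. i < Suc n \<Longrightarrow> ideal (Is i) R"
    and U: "\<And>i F. i < Suc n \<Longrightarrow> finite F \<Longrightarrow> (\<forall>K\<in>F. ideal K R) \<Longrightarrow> Is i \<subseteq> \<Union>F \<Longrightarrow> (\<exists>K\<in>F. Is i \<subseteq> K)"
    and A: "n_absorbing R n I"
  shows "k \<le> Suc n \<Longrightarrow> (\<forall>i<Suc n. x i \<in> Is i) \<Longrightarrow> Mx R Is I k x {..<Suc n} \<Longrightarrow>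
     \<exists>j<Suc n. Mx R Is I k x ({..<Suc n} - {j})"
proof (induct k arbitrary: x)
  have Isc: "y \<in> T \<rightarrow> carrier R" if "\<forall>i\<in>T. y i \<in> Is i" "T \<subseteq> {..<Suc n}" for y T
  proof
    fix i assume i: "i \<in> T"
    then have "i < Suc n" "y i \<in> Is i" using that by auto
    then show "y i \<in> carrier R" using ideal.Icarr[OF Is_id] by blast
  qed
  case 0
  let ?N = "{..<Suc n}"
  have xc: "\<forall>i<Suc n. x i \<in> carrier R" using Isc[of "?N" x] 0 by auto
  have M0: "Mx R Is I 0 x T \<longleftrightarrow> finprod R x T \<in> I" if T: "T \<subseteq> ?N" for T
  proof
    assume "Mx R Is I 0 x T" then show "finprod R x T \<in> I"
      unfolding Mx_def using 0 T by blast
  next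
    assume fx: "finprod R x T \<in> I"
    show "Mx R Is I 0 x T" unfolding Mx_def
    proof (intro allI impI)
      fix y assume y: "(\<forall>i\<in>T. y i \<in> Is i) \<and> (\<forall>i\<in>T. 0 \<le> i \<longrightarrow> y i = x i)"
      have "finprod R y T = finprod R x T"
        by (rule finprod_cong') (use y xc T in \<open>auto simp: subset_iff\<close>)
      then show "finprod R y T \<in> I" using fx by simp
    qed
  qed
  have "finprod R x ?N \<in> I" using M0 0 by blast
  then obtain j where j: "j < Suc n" "finprod R x (?N - {j}) \<in> I"
    using A xc unfolding n_absorbing_def by blast
  then show ?case using M0[of "?N - {j}"] by blast
next
  case (Suc k)
  have Isc: "y \<in> T \<rightarrow> carrier R" if "\<forall>i\<in>T. y i \<in> Is i" "T \<subseteq> {..<Suc n}" for y T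
  proof
    fix i assume i: "i \<in> T"
    then have "i < Suc n" "y i \<in> Is i" using that by auto
    then show "y i \<in> carrier R" using ideal.Icarr[OF Is_id] by blast
  qed
  let ?N = "{..<Suc n}"
  have kn: "k < Suc n" using Suc by simp
  show ?case
  proof (cases "Mx R Is I (Suc k) x (?N - {k})")
    case True then show ?thesis using kn by blast
  next
    case False
    define B where "B j = {finprod R y (?N - {j} - {k}) | y. (\<forall>i\<in>?N - {j} - {k}. y i \<in> Is i) \<and> (\<forall>i\<in>?N - {j} - {k}. k \<le> i \<longrightarrow> y i = x i)}" for j
    define C where "C j = {a\<in>carrier R. \<forall>b\<in>B j. a \<otimes> b \<in> I}" for j
    have Bc: "B j \<subseteq> carrier R" for j
    proof
      fix b assume "b \<in> B j"
      then obtain y where "b = finprod R y (?N - {j} - {k})" "\<forall>i\<in>?N - {j} - {k}. y i \<in> Is i"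
        unfolding B_def by blast
      moreover have "y \<in> ?N - {j} - {k} \<rightarrow> carrier R" using Isc[of "?N - {j} - {k}" y] calculation(2) by auto
      ultimately show "b \<in> carrier R" by simp
    qed
    have Cid: "ideal (C j) R" for j unfolding C_def by (rule colon_ideal[OF I_id Bc])
    have cover: "Is k \<subseteq> \<Union>(C ` (?N - {k}))"
    proof
      fix a assume a: "a \<in> Is k"
      have ac: "a \<in> carrier R" using a ideal.Icarr[OF Is_id[OF kn]] by blast
      have xa: "\<forall>i<Suc n. (x(k:=a)) i \<in> Is i" using Suc.prems a by auto
      have "Mx R Is I k (x(k:=a)) ?N"
        using Suc.prems(3) unfolding Mx_def by auto
      then obtain j where j: "j < Suc n" "Mx R Is I k (x(k:=a)) (?N - {j})"
      proof -
        have "k \<le> Suc n" using Suc.prems(1) by simp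
        from Suc.hyps[OF this xa \<open>Mx R Is I k (x(k:=a)) ?N\<close>] show ?thesis using that by blast
      qed
      have jk: "j \<noteq> k"
      proof
        assume "j = k"
        then have jm: "Mx R Is I k (x(k:=a)) (?N - {k})" using j(2) by simp
        have "Mx R Is I (Suc k) x (?N - {k})" unfolding Mx_def
        proof (intro allI impI)
          fix y assume y: "(\<forall>i\<in>?N - {k}. y i \<in> Is i) \<and> (\<forall>i\<in>?N - {k}. Suc k \<le> i \<longrightarrow> y i = x i)"
          have "\<forall>i\<in>?N - {k}. k \<le> i \<longrightarrow> y i = (x(k:=a)) i"
          proof (intro ballI impI)
            fix i assume "i \<in> ?N - {k}" "k \<le> i"
            then have "Suc k \<le> i" "i \<noteq> k" by auto
            then show "y i = (x(k:=a)) i" using y \<open>i \<in> ?N - {k}\<close> by auto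
          qed
          then show "finprod R y (?N - {k}) \<in> I" using jm y unfolding Mx_def by blast
        qed
        then show False using False by simp
      qed
      have "a \<in> C j" unfolding C_def
      proof (intro CollectI conjI ballI ac)
        fix b assume "b \<in> B j"
        then obtain y where b: "b = finprod R y (?N - {j} - {k})"
            and y1: "\<forall>i\<in>?N - {j} - {k}. y i \<in> Is i"
            and y2: "\<forall>i\<in>?N - {j} - {k}. k \<le> i \<longrightarrow> y i = x i"
          unfolding B_def by blast
        let ?y = "y(k:=a)"
        have "\<forall>i\<in>?N - {j}. ?y i \<in> Is i" using y1 a by auto
        moreover have "\<forall>i\<in>?N - {j}. k \<le> i \<longrightarrow> ?y i = (x(k:=a)) i" using y2 by auto
        ultimately have "finprod R ?y (?N - {j}) \<in> I" using j(2) unfolding Mx_def by blast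
        moreover have "finprod R ?y (?N - {j}) = ?y k \<otimes> finprod R ?y (?N - {j} - {k})"
        proof (rule finprod_split)
          show "?y \<in> ?N - {j} \<rightarrow> carrier R"
            using Isc[of "?N - {j}" ?y] \<open>\<forall>i\<in>?N - {j}. ?y i \<in> Is i\<close> by auto
        qed (use kn jk in auto)
        moreover have "finprod R ?y (?N - {j} - {k}) = b" unfolding b
          by (rule finprod_cong') (use Isc[of "?N - {j} - {k}" y] y1 in auto)
        ultimately show "a \<otimes> b \<in> I" by simp
      qed
      then show "a \<in> \<Union>(C ` (?N - {k}))" using j(1) jk by blast
    qed
    obtain K where K: "K \<in> C ` (?N - {k})" "Is k \<subseteq> K"
      using U[OF kn _ _ cover] Cid by blast
    then obtain j where j: "j \<in> ?N - {k}" "Is k \<subseteq> C j" by blast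
    have "Mx R Is I (Suc k) x (?N - {j})" unfolding Mx_def
    proof (intro allI impI)
      fix y assume y: "(\<forall>i\<in>?N - {j}. y i \<in> Is i) \<and> (\<forall>i\<in>?N - {j}. Suc k \<le> i \<longrightarrow> y i = x i)"
      have "finprod R y (?N - {j} - {k}) \<in> B j" unfolding B_def
        using y by (auto intro!: exI[of _ y] simp: Suc_le_eq)
      moreover have "y k \<in> C j" using j y kn by auto
      ultimately have "y k \<otimes> finprod R y (?N - {j} - {k}) \<in> I" unfolding C_def by blast
      moreover have "finprod R y (?N - {j}) = y k \<otimes> finprod R y (?N - {j} - {k})"
      proof (rule finprod_split)
        show "y \<in> ?N - {j} \<rightarrow> carrier R" using y Isc[of "?N - {j}" y] by auto
      qed (use kn j in auto)
      ultimately show "finprod R y (?N - {j}) \<in> I" by simp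
    qed
    then show ?thesis using j by auto
  qed
qed

end

theorem lemma6:
  fixes R :: "('a, 'b) ring_scheme" and n :: nat and I :: "'a set" and Is :: "nat \<Rightarrow> 'a set"
  assumes "cring R"
    and "\<one>\<^bsub>R\<^esub> \<noteq> \<zero>\<^bsub>R\<^esub>"
    and "n \<ge> 1"
    and "n_absorbing R n I"
    and "\<forall>i<Suc n. u_ideal R (Is i)"
    and "ideal_prod_list R (map Is [0..<Suc n]) \<subseteq> I"
  shows "\<exists>j<Suc n. ideal_prod_list R (map Is (remove1 j [0..<Suc n])) \<subseteq> I"
proof -
  interpret cring R by fact
  let ?N = "{..<Suc n}"
  have I_id: "ideal I R" using assms(4) unfolding n_absorbing_def by blast
  have Is_id: "\<And>i. i < Suc n \<Longrightarrow> ideal (Is i) R" using assms(5) unfolding u_ideal_def by blast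
  have U: "\<And>i F. i < Suc n \<Longrightarrow> finite F \<Longrightarrow> (\<forall>K\<in>F. ideal K R) \<Longrightarrow> Is i \<subseteq> \<Union>F \<Longrightarrow> (\<exists>K\<in>F. Is i \<subseteq> K)"
    using assms(5) unfolding u_ideal_def by blast
  define z where "z = (\<lambda>i::nat. \<zero>\<^bsub>R\<^esub>)"
  have z: "\<forall>i<Suc n. z i \<in> Is i"
    unfolding z_def using Is_id additive_subgroup.zero_closed ideal.axioms(1) by blast
  have MQ: "Mx R Is I (Suc n) z T \<longleftrightarrow> (\<forall>y. (\<forall>i\<in>T. y i \<in> Is i) \<longrightarrow> finprod R y T \<in> I)"
    if "T \<subseteq> ?N" for T
  proof -
    have "\<forall>i\<in>T. \<not> Suc n \<le> i" using that by auto
    then show ?thesis unfolding Mx_def by auto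
  qed
  have L1: "ideal_prod_list R (map Is L) \<subseteq> I \<longleftrightarrow> (\<forall>y. (\<forall>i\<in>set L. y i \<in> Is i) \<longrightarrow> finprod R y (set L) \<in> I)"
    if "distinct L" "set L \<subseteq> ?N" for L
    using prod_list_sub[OF that(1) _ I_id] that(2) Is_id by blast
  have sN: "set [0..<Suc n] = ?N" by (simp only: set_upt atLeast0LessThan)
  have "Mx R Is I (Suc n) z ?N"
    using MQ[of ?N] L1[of "[0..<Suc n]"] assms(6) unfolding sN by (simp del: upt_Suc)
  then obtain j where j: "j < Suc n" "Mx R Is I (Suc n) z (?N - {j})"
    using main_claim[OF I_id Is_id U assms(4) _ z] by blast
  have "set (remove1 j [0..<Suc n]) = ?N - {j}"
    using sN by (simp only: set_remove1_eq distinct_upt)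
  then have "ideal_prod_list R (map Is (remove1 j [0..<Suc n])) \<subseteq> I"
    using L1[of "remove1 j [0..<Suc n]"] MQ[of "?N - {j}"] j(2) by auto
  then show ?thesis using j(1) by blast
qed

end
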